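(* Let $p$ be a prime and $f\ge1$. Suppose $r_0,\dots,r_{f-1}$ are integers in $[-p,p]$ satisfying $\sum_{i=0}^{f-1}p^{f-1-i}r_i\equiv0\pmod{p^f-1}$. Then one of the following holds: (1) $(r_0,\dots,r_{f-1})=\pm(p-1,\dots,p-1)$; (2) the list $r_0,\dots,r_{f-1}$, regarded cyclically (indices mod $f$), can be partitioned into blocks of consecutive entries, each block being either all zeros $(0,\dots,0)$ or of the form $\epsilon(-1,p-1,\dots,p-1,p)$ (i.e. $r_i=-\epsilon$, $r_{i+1}=\dots=r_{i+j-1}=\epsilon(p-1)$, $r_{i+j}=\epsilon p$ for some $j\ge1$, with possibly no entries equal to $\epsilon(p-1)$), where the sign $\epsilon\in\{\pm1\}$ may depend on the block; or (3) $p=2$ and $(r_0,\dots,r_{f-1})=\pm(2,\dots,2)$. *)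

theory Defs
  imports Main "HOL-Computational_Algebra.Primes"
begin

text \<open>A vector (r_0,...,r_{f-1}) is encoded as a function r :: nat => int; only the
values at indices i < f matter. Cyclic indices are taken mod f.\<close>

definition good_block :: "nat \<Rightarrow> nat \<Rightarrow> (nat \<Rightarrow> int) \<Rightarrow> nat \<Rightarrow> nat \<Rightarrow> bool" where
  "good_block p f r s L \<longleftrightarrow>
     (\<forall>k<L. r ((s + k) mod f) = 0) \<or>
     (\<exists>\<epsilon>::int. (\<epsilon> = 1 \<or> \<epsilon> = -1) \<and> L \<ge> 2 \<and>
        r (s mod f) = - \<epsilon> \<and>
        (\<forall>k. 0 < k \<and> k < L - 1 \<longrightarrow> r ((s + k) mod f) = \<epsilon> * (int p - 1)) \<and>
        r ((s + (L - 1)) mod f) = \<epsilon> * int p)"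

definition cyclic_block_partition :: "nat \<Rightarrow> nat \<Rightarrow> (nat \<Rightarrow> int) \<Rightarrow> bool" where
  "cyclic_block_partition p f r \<longleftrightarrow>
     (\<exists>t Ls. (\<forall>L\<in>set Ls. L \<ge> 1) \<and> sum_list Ls = f \<and>
        (\<forall>i<length Ls. good_block p f r (t + sum_list (take i Ls)) (Ls ! i)))"

end

theory Submission
  imports Defs
begin

fun cseq :: "int \<Rightarrow> int \<Rightarrow> (nat \<Rightarrow> int) \<Rightarrow> nat \<Rightarrow> int" where
  "cseq P k r 0 = k"
| "cseq P k r (Suc j) = P * cseq P k r j - r j"

lemma cseq_closed:
  "cseq P k r j = P ^ j * k - (\<Sum>i<j. P ^ (j - 1 - i) * r i)"
proof (induction j)
  case 0 then show ?case by simp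
next
  case (Suc j)
  have "(\<Sum>i<Suc j. P ^ (Suc j - 1 - i) * r i) = (\<Sum>i<j. P ^ (j - i) * r i) + r j"
    by simp
  also have "(\<Sum>i<j. P ^ (j - i) * r i) = (\<Sum>i<j. P * (P ^ (j - 1 - i) * r i))"
  proof (rule sum.cong)
    fix i assume "i \<in> {..<j}"
    then have "j - i = Suc (j - 1 - i)" by auto
    then show "P ^ (j - i) * r i = P * (P ^ (j - 1 - i) * r i)" by simp
  qed simp
  also have "\<dots> = P * (\<Sum>i<j. P ^ (j - 1 - i) * r i)" by (simp add: sum_distrib_left)
  finally have "(\<Sum>i<Suc j. P ^ (Suc j - 1 - i) * r i) = P * (\<Sum>i<j. P ^ (j - 1 - i) * r i) + r j" .
  moreover have "cseq P k r (Suc j) = P * (P ^ j * k - (\<Sum>i<j. P ^ (j - 1 - i) * r i)) - r j"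
    using Suc by simp
  ultimately show ?case by (simp add: right_diff_distrib mult.assoc)
qed

definition gb :: "nat \<Rightarrow> (nat \<Rightarrow> int) \<Rightarrow> nat \<Rightarrow> nat \<Rightarrow> bool" where
  "gb p G s L \<longleftrightarrow> (\<forall>k<L. G (s+k) = 0) \<or>
     (\<exists>\<epsilon>::int. (\<epsilon> = 1 \<or> \<epsilon> = -1) \<and> L \<ge> 2 \<and> G s = - \<epsilon> \<and>
        (\<forall>k. 0 < k \<and> k < L - 1 \<longrightarrow> G (s + k) = \<epsilon> * (int p - 1)) \<and>
        G (s + (L - 1)) = \<epsilon> * int p)"

lemma blocks:
  fixes G D :: "nat \<Rightarrow> int"
  assumes GD: "\<And>i. G i = int p * D i - D (Suc i)"
    and Db: "\<And>i. \<bar>D i\<bar> \<le> 1"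
    and Gb: "\<And>i. \<bar>G i\<bar> \<le> int p"
  shows "D s = 0 \<Longrightarrow> D (s + n) = 0 \<Longrightarrow>
    \<exists>Ls. (\<forall>L\<in>set Ls. L \<ge> 1) \<and> sum_list Ls = n \<and>
        (\<forall>i<length Ls. gb p G (s + sum_list (take i Ls)) (Ls ! i))"
proof (induction n arbitrary: s rule: less_induct)
  case (less n)
  show ?case
  proof (cases "n = 0")
    case True then show ?thesis by (intro exI[of _ "[]"]) simp
  next
    case False
    define m where "m = (LEAST k. 0 < k \<and> D (s + k) = 0)"
    have ex: "0 < n \<and> D (s + n) = 0" using False less by simp
    have m1: "0 < m \<and> D (s + m) = 0" unfolding m_def by (rule LeastI[where P="\<lambda>k. 0 < k \<and> D (s + k) = 0", OF ex])
    have mn: "m \<le> n" unfolding m_def by (rule Least_le[where P="\<lambda>k. 0 < k \<and> D (s + k) = 0", OF ex])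
    have nz: "D (s + k) \<noteq> 0" if "0 < k" "k < m" for k
      using not_less_Least[of k "\<lambda>k. 0 < k \<and> D (s + k) = 0"] that unfolding m_def by auto
    have good: "gb p G s m"
    proof (cases "m = 1")
      case True
      then show ?thesis using m1 less.prems(1) GD[of s] unfolding gb_def by simp
    next
      case False
      then have m2: "m \<ge> 2" using m1 by simp
      define e where "e = D (s + 1)"
      have e: "e = 1 \<or> e = -1" using nz[of 1] m2 Db[of "s+1"] unfolding e_def by auto
      have pr: "D (s + Suc k) = e" if "k < m - 1" for k
        using that
      proof (induction k)
        case 0 then show ?case by (simp add: e_def)
      next
        case (Suc k)
        then have h: "D (s + Suc k) = e" by simp
        have nz2: "D (s + Suc (Suc k)) \<noteq> 0" using nz[of "Suc (Suc k)"] Suc.prems by simp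
        have "G (s + Suc k) = int p * e - D (Suc (s + Suc k))" using GD h by simp
        then have "\<bar>int p * e - D (s + Suc (Suc k))\<bar> \<le> int p" using Gb[of "s + Suc k"] by simp
        then show ?case using e nz2 Db[of "s + Suc (Suc k)"] by (auto simp: abs_if split: if_splits)
      qed
      have g0: "G s = - e" using GD[of s] less.prems(1) e_def by simp
      have gmid: "G (s + k) = e * (int p - 1)" if "0 < k" "k < m - 1" for k
      proof -
        have k0: "0 < k" "k < m - 1" by fact+
        obtain k' where k': "k = Suc k'" using k0 by (cases k) auto
        have "D (s + k) = e" using pr[of k'] k' k0 by simp
        moreover have "D (s + Suc k) = e" using pr[of k] k0 by simp
        ultimately show ?thesis using GD[of "s+k"] by (simp add: algebra_simps)
      qed
      have glast: "G (s + (m - 1)) = e * int p"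
      proof -
        have "D (s + (m - 1)) = e" using pr[of "m - 2"] m2 by (simp add: Suc_diff_Suc numeral_2_eq_2)
        moreover have "Suc (s + (m - 1)) = s + m" using m2 by simp
        ultimately show ?thesis using GD[of "s + (m - 1)"] m1 by simp
      qed
      show ?thesis unfolding gb_def using e m2 g0 gmid glast by blast
    qed
    have "n - m < n" using m1 mn False by simp
    moreover have "D (s + m + (n - m)) = 0" using mn less.prems(2) by simp
    ultimately obtain Ls where Ls: "\<forall>L\<in>set Ls. L \<ge> 1" "sum_list Ls = n - m"
        "\<forall>i<length Ls. gb p G (s + m + sum_list (take i Ls)) (Ls ! i)"
      using less.IH[of "n - m" "s + m"] m1 by blast
    show ?thesis
    proof (intro exI[of _ "m # Ls"] conjI)
      show "\<forall>L\<in>set (m # Ls). 1 \<le> L" using Ls m1 by auto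
      show "sum_list (m # Ls) = n" using Ls mn by simp
      show "\<forall>i<length (m # Ls). gb p G (s + sum_list (take i (m # Ls))) ((m # Ls) ! i)"
      proof (intro allI impI)
        fix i assume "i < length (m # Ls)"
        then show "gb p G (s + sum_list (take i (m # Ls))) ((m # Ls) ! i)"
          using good Ls(3) by (cases i) (auto simp: add.assoc)
      qed
    qed
  qed
qed

lemma propagate:
  fixes c :: "nat \<Rightarrow> int"
  assumes step: "\<And>j. j < f \<Longrightarrow> c j = v \<Longrightarrow> c (Suc j) = v"
    and cyc: "c f = c 0" and a: "a < f" "c a = v"
  shows "\<forall>i\<le>f. c i = v"
proof -
  have fw: "c i = v" if "j \<le> i" "i \<le> f" "c j = v" for i j
    using that
  proof (induction i)
    case 0 then show ?case by simp
  next
    case (Suc i)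
    show ?case
    proof (cases "j = Suc i")
      case True then show ?thesis using Suc by simp
    next
      case False then show ?thesis using Suc step[of i] by simp
    qed
  qed
  have "c f = v" using fw[of a f] a by simp
  then have "c 0 = v" using cyc by simp
  then show ?thesis using fw[of 0] by simp
qed

theorem mainTheorem9:
  fixes p f :: nat and r :: "nat \<Rightarrow> int"
  assumes "prime p" and "f \<ge> 1"
    and "\<forall>i<f. - int p \<le> r i \<and> r i \<le> int p"
    and "(int p ^ f - 1) dvd (\<Sum>i<f. int p ^ (f - 1 - i) * r i)"
  shows "(\<forall>i<f. r i = int p - 1) \<or> (\<forall>i<f. r i = - (int p - 1))
       \<or> cyclic_block_partition p f r
       \<or> (p = 2 \<and> ((\<forall>i<f. r i = 2) \<or> (\<forall>i<f. r i = -2)))"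
proof -
  have p2: "p \<ge> 2" using assms(1) prime_ge_2_nat by blast
  obtain k where k: "(\<Sum>i<f. int p ^ (f - 1 - i) * r i) = (int p ^ f - 1) * k"
    using assms(4) by (auto elim: dvdE)
  define c where "c = cseq (int p) k r"
  have cS: "c (Suc j) = int p * c j - r j" for j by (simp add: c_def)
  have cf: "c f = c 0"
    using cseq_closed[of "int p" k r f] k by (simp add: c_def algebra_simps)
  have rj: "r j = int p * c j - c (Suc j)" for j using cS[of j] by simp
  have rb: "\<bar>r j\<bar> \<le> int p" if "j < f" for j using assms(3) that by auto
  define M where "M = Max ((\<lambda>j. \<bar>c j\<bar>) ` {..<f})"
  have fin: "finite ((\<lambda>j. \<bar>c j\<bar>) ` {..<f})" by simp
  have ne: "(\<lambda>j. \<bar>c j\<bar>) ` {..<f} \<noteq> {}" using assms(2) by (auto simp: lessThan_empty_iff)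
  have cM: "\<bar>c j\<bar> \<le> M" if "j < f" for j
    unfolding M_def using that fin by (intro Max_ge) auto
  have cM': "\<bar>c j\<bar> \<le> M" if "j \<le> f" for j
  proof (cases "j = f")
    case True then show ?thesis using cf cM[of 0] assms(2) by simp
  qed (use that cM in simp)
  obtain j0 where j0: "j0 < f" "\<bar>c j0\<bar> = M"
    using Max_in[OF fin ne] unfolding M_def by auto
  have "int p * \<bar>c j0\<bar> \<le> M + int p"
  proof -
    have "int p * c j0 = c (Suc j0) + r j0" using rj[of j0] by simp
    then have "\<bar>int p * c j0\<bar> \<le> \<bar>c (Suc j0)\<bar> + \<bar>r j0\<bar>" by (metis abs_triangle_ineq)
    moreover have "\<bar>c (Suc j0)\<bar> \<le> M" using cM'[of "Suc j0"] j0 by simp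
    ultimately show ?thesis using rb[OF j0(1)] by (simp add: abs_mult)
  qed
  then have Mb: "(int p - 1) * M \<le> int p" using j0 by (simp add: algebra_simps)
  have M2: "M \<le> 2" and M1: "p \<noteq> 2 \<Longrightarrow> M \<le> 1"
  proof -
    have "M \<le> 1 \<or> p = 2"
    proof (rule ccontr)
      assume "\<not> (M \<le> 1 \<or> p = 2)"
      then have "M \<ge> 2" "p \<ge> 3" using p2 by auto
      then have "(int p - 1) * 2 \<le> (int p - 1) * M" by (intro mult_left_mono) auto
      then show False using Mb \<open>p \<ge> 3\<close> by simp
    qed
    moreover have "p = 2 \<Longrightarrow> M \<le> 2" using Mb by simp
    ultimately show "M \<le> 2" "p \<noteq> 2 \<Longrightarrow> M \<le> 1" by auto
  qed
  have cb: "\<bar>c j\<bar> \<le> 2" if "j \<le> f" for j using cM'[OF that] M2 by simp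
  show ?thesis
  proof (cases "\<exists>a<f. \<bar>c a\<bar> = 2")
    case True
    then obtain a where a: "a < f" "\<bar>c a\<bar> = 2" by blast
    then have pp: "p = 2" using M1 cM[of a] by fastforce
    have rr: "\<bar>2 * c j - c (Suc j)\<bar> \<le> 2" if "j < f" for j
      using rb[OF that] rj[of j] pp by simp
    show ?thesis
    proof (cases "c a = 2")
      case True
      have "\<forall>i\<le>f. c i = 2"
      proof (rule propagate[OF _ cf a(1) True])
        fix j assume "j < f" "c j = 2"
        then show "c (Suc j) = 2" using rr[of j] cb[of "Suc j"] by auto
      qed
      then have "\<forall>i<f. r i = 2" using rj pp by auto
      then show ?thesis using pp by simp
    next
      case False
      then have ca: "c a = -2" using a by auto
      have "\<forall>i\<le>f. c i = -2"
      proof (rule propagate[OF _ cf a(1) ca])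
        fix j assume "j < f" "c j = -2"
        then show "c (Suc j) = -2" using rr[of j] cb[of "Suc j"] by auto
      qed
      then have "\<forall>i<f. r i = -2" using rj pp by auto
      then show ?thesis using pp by simp
    qed
  next
    case False
    have c1: "\<bar>c j\<bar> \<le> 1" if "j \<le> f" for j
    proof (cases "j = f")
      case True then show ?thesis using False cb[of 0] cf assms(2) by fastforce
    next
      case F: False
      have jf: "j < f" using F that by simp
      then have "\<bar>c j\<bar> \<noteq> 2" using False by blast
      then show ?thesis using cb[of j] that by linarith
    qed
    have sw: "\<bar>int p * c j - c (Suc j)\<bar> \<le> int p" if "j < f" for j
      using rb[OF that] rj[of j] by simp
    show ?thesis
    proof (cases "\<exists>t<f. c t = 0")
      case False
      have c0: "c 0 = 1 \<or> c 0 = -1" using False c1[of 0] assms(2) by auto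
      have nzS: "c (Suc j) \<noteq> 0" if "j < f" for j
      proof (cases "Suc j = f")
        case True then show ?thesis using cf False assms(2) by auto
      next
        case F: False then show ?thesis using False that by auto
      qed
      show ?thesis
      proof (cases "c 0 = 1")
        case True
        have "\<forall>i\<le>f. c i = 1"
        proof (rule propagate[OF _ cf _ True])
          fix j assume j: "j < f" "c j = 1"
          then show "c (Suc j) = 1" using sw[of j] c1[of "Suc j"] nzS[of j] p2 by (auto simp: abs_if split: if_splits)
        qed (use assms(2) in simp)
        then have "\<forall>i<f. r i = int p - 1" using rj by auto
        then show ?thesis by simp
      next
        case F: False
        then have cm: "c 0 = -1" using c0 by simp
        have "\<forall>i\<le>f. c i = -1"
        proof (rule propagate[OF _ cf _ cm])
          fix j assume j: "j < f" "c j = -1"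
          then show "c (Suc j) = -1" using sw[of j] c1[of "Suc j"] nzS[of j] p2 by (auto simp: abs_if split: if_splits)
        qed (use assms(2) in simp)
        then have "\<forall>i<f. r i = - (int p - 1)" using rj by auto
        then show ?thesis by simp
      qed
    next
      case True
      then obtain t where t: "t < f" "c t = 0" by blast
      define D where "D i = c (i mod f)" for i
      define G where "G i = r (i mod f)" for i
      have cmod: "c (Suc i mod f) = c (Suc (i mod f))" for i
      proof (cases "Suc (i mod f) = f")
        case True
        then have "Suc i mod f = 0" by (metis mod_Suc)
        then show ?thesis using True cf by simp
      next
        case False
        then have "Suc i mod f = Suc (i mod f)" by (metis mod_Suc)
        then show ?thesis by simp
      qed
      have GD: "G i = int p * D i - D (Suc i)" for i
        using rj[of "i mod f"] cmod[of i] unfolding G_def D_def by simp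
      have Db: "\<bar>D i\<bar> \<le> 1" for i
        unfolding D_def using c1[of "i mod f"] assms(2) by (simp add: less_imp_le)
      have Gb: "\<bar>G i\<bar> \<le> int p" for i
        unfolding G_def using rb[of "i mod f"] assms(2) by simp
      have "D t = 0" "D (t + f) = 0" using t by (simp_all add: D_def)
      from blocks[OF GD Db Gb this]
      obtain Ls where Ls: "\<forall>L\<in>set Ls. L \<ge> 1" "sum_list Ls = f"
        "\<forall>i<length Ls. gb p G (t + sum_list (take i Ls)) (Ls ! i)" by blast
      have "good_block p f r s L = gb p G s L" for s L
        unfolding good_block_def gb_def G_def by simp
      then have "cyclic_block_partition p f r"
        unfolding cyclic_block_partition_def using Ls by metis
      then show ?thesis by simp
    qed
  qed
qed

end
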